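(* Let $0<\alpha<1$, $0<\beta\leq 1$, $L=[-1,-\beta]\cup\{\alpha\}$, let $P\subset\mathbb{R}^d$ be an $L$-spherical code, and let $G$ be the graph on vertex set $P$ in which distinct $x,y\in P$ are adjacent iff $\langle x,y\rangle\in[-1,-\beta]$. Let $\varepsilon>0$. Suppose $p_1,\dots,p_n$ is an independent set in $G$, and suppose $p^{(1)},\dots,p^{(m)}\in P$ are distinct points of the form $p^{(i)}=v^{(i)}+u^{(i)}$ with $v^{(i)}\in\operatorname{span}\{p_1,\dots,p_n\}$ and $u^{(i)}$ orthogonal to $\operatorname{span}\{p_1,\dots,p_n\}$, such that $\langle v^{(i)},v^{(j)}\rangle>\alpha+\varepsilon$ for all $i,j$. Then $m\leq 1/\varepsilon+1$.
   Context: For a set $L\subseteq[-1,1]$, an $L$-spherical code in $\mathbb{R}^d$ is a set $P$ of unit vectors such that $\langle x,y\rangle\in L$ for all distinct $x,y\in P$. *)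

theory Defs
  imports "HOL-Analysis.Analysis"
begin

definition spherical_code :: "real set \<Rightarrow> 'a::real_inner set \<Rightarrow> bool" where
  "spherical_code L P \<longleftrightarrow>
     (\<forall>x\<in>P. norm x = 1) \<and> (\<forall>x\<in>P. \<forall>y\<in>P. x \<noteq> y \<longrightarrow> inner x y \<in> L)"

definition code_adj :: "real \<Rightarrow> 'a::real_inner \<Rightarrow> 'a \<Rightarrow> bool" where
  "code_adj \<beta> x y \<longleftrightarrow> x \<noteq> y \<and> inner x y \<in> {-1..-\<beta>}"

definition code_independent :: "real \<Rightarrow> 'a::real_inner set \<Rightarrow> 'a set \<Rightarrow> bool" where
  "code_independent \<beta> P S \<longleftrightarrow> S \<subseteq> P \<and> (\<forall>x\<in>S. \<forall>y\<in>S. \<not> code_adj \<beta> x y)"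

end

theory Submission
  imports Defs
begin

theorem lemma5:
  fixes \<alpha> \<beta> \<epsilon> :: real
    and P :: "'a::euclidean_space set"
    and p :: "nat \<Rightarrow> 'a" and n :: nat
    and q v u :: "nat \<Rightarrow> 'a" and m :: nat
  assumes "0 < \<alpha>" "\<alpha> < 1" "0 < \<beta>" "\<beta> \<le> 1"
    and "spherical_code ({-1..-\<beta>} \<union> {\<alpha>}) P"
    and "0 < \<epsilon>"
    and "inj_on p {..<n}"
    and "code_independent \<beta> P (p ` {..<n})"
    and "inj_on q {..<m}"
    and "\<forall>i<m. q i \<in> P"
    and "\<forall>i<m. q i = v i + u i"
    and "\<forall>i<m. v i \<in> span (p ` {..<n})"
    and "\<forall>i<m. \<forall>w\<in>span (p ` {..<n}). inner (u i) w = 0"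
    and "\<forall>i<m. \<forall>j<m. inner (v i) (v j) > \<alpha> + \<epsilon>"
  shows "real m \<le> 1 / \<epsilon> + 1"
proof (cases "m = 0")
  case True then show ?thesis using assms(6) by simp
next
  case False
  have qq: "inner (q i) (q j) = inner (v i) (v j) + inner (u i) (u j)" if "i<m" "j<m" for i j
  proof -
    have a: "inner (u i) (v j) = 0" using assms(12,13) that by blast
    have b: "inner (u j) (v i) = 0" using assms(12,13) that by blast
    have "inner (q i) (q j) = inner (v i + u i) (v j + u j)" using assms(11) that by simp
    also have "\<dots> = inner (v i) (v j) + inner (u i) (v j) + inner (v i) (u j) + inner (u i) (u j)"
      by (simp add: inner_add_left inner_add_right)
    finally show ?thesis using a b by (simp add: inner_commute)
  qed
  have off: "inner (u i) (u j) \<le> - \<epsilon>" if "i<m" "j<m" "i \<noteq> j" for i j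
  proof -
    have "q i \<noteq> q j" using assms(9) that by (auto simp: inj_on_def)
    moreover have "q i \<in> P" "q j \<in> P" using assms(10) that by auto
    ultimately have "inner (q i) (q j) \<in> {-1..-\<beta>} \<union> {\<alpha>}"
      using assms(5) unfolding spherical_code_def by blast
    hence "inner (q i) (q j) \<le> \<alpha>" using assms(1,3) by auto
    thus ?thesis using qq[OF that(1,2)] assms(14) that by force
  qed
  have diag: "inner (u i) (u i) \<le> 1" if "i<m" for i
  proof -
    have "norm (q i) = 1" using assms(5,10) that unfolding spherical_code_def by blast
    hence "inner (q i) (q i) = 1" by (simp add: dot_square_norm)
    moreover have "inner (v i) (v i) \<ge> 0" by simp
    ultimately show ?thesis using qq[OF that that] by linarith
  qed
  have row: "(\<Sum>j<m. inner (u i) (u j)) \<le> 1 - real (m - 1) * \<epsilon>" if "i<m" for i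
  proof -
    have "(\<Sum>j<m. inner (u i) (u j)) = inner (u i) (u i) + (\<Sum>j\<in>{..<m}-{i}. inner (u i) (u j))"
      using that by (simp add: sum.remove)
    moreover have "(\<Sum>j\<in>{..<m}-{i}. inner (u i) (u j)) \<le> of_nat (card ({..<m}-{i})) * (- \<epsilon>)"
      using off that by (intro sum_bounded_above) auto
    moreover have "card ({..<m}-{i}) = m - 1" using that by simp
    ultimately show ?thesis using diag[OF that] by simp
  qed
  define S where "S = (\<Sum>i<m. u i)"
  have "0 \<le> inner S S" by simp
  also have "inner S S = (\<Sum>i<m. \<Sum>j<m. inner (u i) (u j))"
    unfolding S_def by (simp add: inner_sum_left inner_sum_right) (rule sum.swap)
  also have "\<dots> \<le> (\<Sum>i<m. 1 - real (m - 1) * \<epsilon>)" using row by (intro sum_mono) auto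
  also have "\<dots> = real m * (1 - real (m - 1) * \<epsilon>)" by (simp del: of_nat_diff)
  finally have "0 \<le> 1 - real (m - 1) * \<epsilon>" using False
    by (simp add: zero_le_mult_iff del: of_nat_diff)
  hence "real (m - 1) \<le> 1 / \<epsilon>" using assms(6) by (simp add: field_simps del: of_nat_diff)
  thus ?thesis using False by (simp add: of_nat_diff)
qed

end
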